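(* For all $f,g\in I\cdot\mathrm{Mult}[[B]]=\{I\cdot F: F\in\mathrm{Mult}[[B]]\}$, $$f\boxtimes g=(f\boxtimes_1 g)\cdot(f\boxtimes_2 g),\qquad g\,\underline\boxtimes\,f=(f\boxtimes_2 g)\cdot(f\boxtimes_1 g).$$
   Context: $B$ is a unital algebra over a field $\mathbb K$ of characteristic zero. $\mathrm{Mult}[[B]]$: sequences $f=(f_n)_{n\ge0}$ of multilinear maps $f_n:B^n\to B$. Product $(f\cdot g)_n(x_1,\dots,x_n)=\sum_{k=0}^n f_k(x_1,\dots,x_k)g_{n-k}(x_{k+1},\dots,x_n)$; $I=(\delta_{n,1}\mathrm{id}_B)$, so $(I\cdot F)_n(x_1,\dots,x_n)=x_1F_{n-1}(x_2,\dots,x_n)$, $(I\cdot F)_0=0$. Planar binary trees: $Y_0=\{|\}$, $Y_n=\{\sigma\vee\tau:\sigma\in Y_k,\tau\in Y_l,k+l=n-1\}$ ($\sigma\vee\tau$: root with left subtree $\sigma$, right subtree $\tau$); each $\tau\in Y_n$, $n\ge1$, is uniquely $\tau_1\vee(\tau_2\vee(\cdots\vee(\tau_k\vee|)))$; $j_i=|\tau_1|+\dots+|\tau_i|+i$. For $f,g\in\mathrm{Mult}[[B]]$: $(f\cup g)_|=1$, $(f\cup g)_\tau(x_1,\dots,x_n)=g_k((g\cup f)_{\tau_1}(x_1,\dots,x_{j_1-1})x_{j_1},\dots,(g\cup f)_{\tau_k}(x_{j_{k-1}+1},\dots,x_{j_k-1})x_{j_k})$. $R:Y\to Y$: $R(|)=|$,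 $R(\sigma\vee\tau)=(|\vee R(\sigma))\vee R(\tau)$. Boxed convolutions (for $n\ge1$): $(f\boxtimes g)_n(x_1,\dots,x_n)=\sum_{\tau\in Y_n}(f\cup g)_{R(\tau)}(x_1,1,x_2,1,\dots,x_n,1)$, $(f\boxtimes g)_0=g_0$; $(f\underline\boxtimes g)_n(x_1,\dots,x_n)=\sum_{\tau\in Y_n}(f\cup g)_{R(\tau)}(1,x_1,1,x_2,\dots,1,x_n)$, $(f\underline\boxtimes g)_0=g_0$; $(f\boxtimes_1 g)_n(x_1,\dots,x_n)=\sum_{\tau\in Y_{n-1}}(g\cup f)_{|\vee R(\tau)}(x_1,1,x_2,1,\dots,1,x_n)$, $(f\boxtimes_1 g)_0=0$; $(f\boxtimes_2 g)_n(x_1,\dots,x_n)=\sum_{\tau\in Y_n}(f\cup g)_{|\vee R(\tau)}(1,x_1,1,x_2,\dots,1,x_n,1)$, $(f\boxtimes_2 g)_0=g_1(1)$. *)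

theory Defs
  imports Main
begin

definition is_algebra :: "('k::field_char_0 \<Rightarrow> 'b::ring_1 \<Rightarrow> 'b) \<Rightarrow> bool" where
  "is_algebra scal \<longleftrightarrow>
     (\<forall>a x y. scal a (x + y) = scal a x + scal a y) \<and>
     (\<forall>a b x. scal (a + b) x = scal a x + scal b x) \<and>
     (\<forall>a b x. scal a (scal b x) = scal (a * b) x) \<and>
     (\<forall>x. scal 1 x = x) \<and>
     (\<forall>a x y. scal a (x * y) = scal a x * y) \<and>
     (\<forall>a x y. scal a (x * y) = x * scal a y)"

text \<open>An element f of Mult[[B]] is represented as a function on lists:
 f_n(x_1,...,x_n) = f [x_1,...,x_n], so the arity is the length of the list.\<close>

definition Mult :: "('k::field_char_0 \<Rightarrow> 'b::ring_1 \<Rightarrow> 'b) \<Rightarrow> ('b list \<Rightarrow> 'b) set" where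
  "Mult scal = {F. \<forall>xs i a b c. i < length xs \<longrightarrow>
      F (xs[i := a + b]) = F (xs[i := a]) + F (xs[i := b]) \<and>
      F (xs[i := scal c a]) = scal c (F (xs[i := a]))}"

definition mprod :: "('b::ring_1 list \<Rightarrow> 'b) \<Rightarrow> ('b list \<Rightarrow> 'b) \<Rightarrow> 'b list \<Rightarrow> 'b" where
  "mprod f g xs = (\<Sum>k = 0..length xs. f (take k xs) * g (drop k xs))"

definition Iop :: "'b::ring_1 list \<Rightarrow> 'b" where
  "Iop xs = (if length xs = 1 then hd xs else 0)"

definition IMult :: "('k::field_char_0 \<Rightarrow> 'b::ring_1 \<Rightarrow> 'b) \<Rightarrow> ('b list \<Rightarrow> 'b) set" where
  "IMult scal = {mprod Iop F | F. F \<in> Mult scal}"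

datatype ptree = Leaf | Node ptree ptree

fun nodes :: "ptree \<Rightarrow> nat" where
  "nodes Leaf = 0"
| "nodes (Node l r) = Suc (nodes l + nodes r)"

definition Y :: "nat \<Rightarrow> ptree set" where
  "Y n = {t. nodes t = n}"

fun Rt :: "ptree \<Rightarrow> ptree" where
  "Rt Leaf = Leaf"
| "Rt (Node s t) = Node (Node Leaf (Rt s)) (Rt t)"

text \<open>cup_args f g tau xs is the argument list of g_k in (f cup g)_tau(xs), where
 tau = tau_1 v (tau_2 v (... v (tau_k v |))): the i-th entry is
 (g cup f)_{tau_i}(block) * x_{j_i}.  (g cup f)_| = 1 and
 (g cup f)_sigma = f_m(cup_args g f sigma ...) for sigma a non-leaf.\<close>
fun cup_args :: "('b::ring_1 list \<Rightarrow> 'b) \<Rightarrow> ('b list \<Rightarrow> 'b) \<Rightarrow> ptree \<Rightarrow> 'b list \<Rightarrow> 'b list" where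
  "cup_args f g Leaf xs = []"
| "cup_args f g (Node l r) xs =
     ((case l of Leaf \<Rightarrow> 1 | Node _ _ \<Rightarrow> f (cup_args g f l (take (nodes l) xs))) * xs ! nodes l)
     # cup_args f g r (drop (Suc (nodes l)) xs)"

definition cup :: "('b::ring_1 list \<Rightarrow> 'b) \<Rightarrow> ('b list \<Rightarrow> 'b) \<Rightarrow> ptree \<Rightarrow> 'b list \<Rightarrow> 'b" where
  "cup f g t xs = (case t of Leaf \<Rightarrow> 1 | Node _ _ \<Rightarrow> g (cup_args f g t xs))"

definition il1 :: "'b::ring_1 list \<Rightarrow> 'b list" where
  "il1 xs = concat (map (\<lambda>x. [x, 1]) xs)"
definition il2 :: "'b::ring_1 list \<Rightarrow> 'b list" where
  "il2 xs = concat (map (\<lambda>x. [1, x]) xs)"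

definition boxtimes :: "('b::ring_1 list \<Rightarrow> 'b) \<Rightarrow> ('b list \<Rightarrow> 'b) \<Rightarrow> 'b list \<Rightarrow> 'b" where
  "boxtimes f g xs = (if xs = [] then g []
     else (\<Sum>\<tau>\<in>Y (length xs). cup f g (Rt \<tau>) (il1 xs)))"

definition uboxtimes :: "('b::ring_1 list \<Rightarrow> 'b) \<Rightarrow> ('b list \<Rightarrow> 'b) \<Rightarrow> 'b list \<Rightarrow> 'b" where
  "uboxtimes f g xs = (if xs = [] then g []
     else (\<Sum>\<tau>\<in>Y (length xs). cup f g (Rt \<tau>) (il2 xs)))"

text \<open>(x_1,1,x_2,1,...,1,x_n) = butlast (il1 xs); (1,x_1,...,1,x_n,1) = il2 xs @ [1]\<close>
definition boxtimes1 :: "('b::ring_1 list \<Rightarrow> 'b) \<Rightarrow> ('b list \<Rightarrow> 'b) \<Rightarrow> 'b list \<Rightarrow> 'b" where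
  "boxtimes1 f g xs = (if xs = [] then 0
     else (\<Sum>\<tau>\<in>Y (length xs - 1). cup g f (Node Leaf (Rt \<tau>)) (butlast (il1 xs))))"

definition boxtimes2 :: "('b::ring_1 list \<Rightarrow> 'b) \<Rightarrow> ('b list \<Rightarrow> 'b) \<Rightarrow> 'b list \<Rightarrow> 'b" where
  "boxtimes2 f g xs = (if xs = [] then g [1]
     else (\<Sum>\<tau>\<in>Y (length xs). cup f g (Node Leaf (Rt \<tau>)) (il2 xs @ [1])))"

end

theory Submission imports Defs begin

lemma Y0: "Y 0 = {Leaf}"
  unfolding Y_def by (auto elim: nodes.elims)

lemma Y_Suc: "Y (Suc n) = (\<Union>m\<in>{0..n}. (\<lambda>(a,b). Node a b) ` (Y m \<times> Y (n-m)))"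
proof safe
  fix t assume "t \<in> Y (Suc n)"
  then obtain a b where t: "t = Node a b" "nodes a + nodes b = n"
    unfolding Y_def by (cases t) auto
  then show "t \<in> (\<Union>m\<in>{0..n}. (\<lambda>(a,b). Node a b) ` (Y m \<times> Y (n-m)))"
    unfolding Y_def by (auto intro!: bexI[of _ "nodes a"] image_eqI[of _ _ "(a,b)"])
qed (auto simp: Y_def)

lemma finite_Y: "finite (Y n)"
proof (induction n rule: less_induct)
  case (less n)
  show ?case
  proof (cases n)
    case 0 then show ?thesis by (simp add: Y0)
  next
    case (Suc k)
    show ?thesis unfolding Suc Y_Suc using less Suc by (auto simp: finite_cartesian_product)
  qed
qed

lemma sum_Y_Suc:
  "(\<Sum>t\<in>Y (Suc n). h t) = (\<Sum>m=0..n. \<Sum>s\<in>Y m. \<Sum>r\<in>Y (n-m). h (Node s r))"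
proof -
  have "(\<Sum>t\<in>Y (Suc n). h t) = (\<Sum>m=0..n. \<Sum>t\<in>(\<lambda>(a,b). Node a b) ` (Y m \<times> Y (n-m)). h t)"
    unfolding Y_Suc
    by (rule sum.UNION_disjoint) (simp, simp add: finite_Y, fastforce simp: Y_def)
  also have "\<dots> = (\<Sum>m=0..n. \<Sum>p\<in>Y m \<times> Y (n-m). h (Node (fst p) (snd p)))"
    by (rule sum.cong[OF refl], subst sum.reindex) (auto simp: inj_on_def case_prod_beta)
  also have "\<dots> = (\<Sum>m=0..n. \<Sum>s\<in>Y m. \<Sum>r\<in>Y (n-m). h (Node s r))"
    by (rule sum.cong[OF refl], subst sum.cartesian_product) (auto simp: case_prod_beta)
  finally show ?thesis .
qed

lemma len_il1[simp]: "length (il1 xs) = 2 * length xs"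
  by (induction xs) (auto simp: il1_def)
lemma len_il2[simp]: "length (il2 xs) = 2 * length xs"
  by (induction xs) (auto simp: il2_def)
lemma il1_Cons[simp]: "il1 (a#xs) = a # 1 # il1 xs" by (simp add: il1_def)
lemma il2_Cons[simp]: "il2 (a#xs) = 1 # a # il2 xs" by (simp add: il2_def)
lemma il1_Nil[simp]: "il1 [] = []" by (simp add: il1_def)
lemma il2_Nil[simp]: "il2 [] = []" by (simp add: il2_def)

lemma il1_eq_Nil[simp]: "il1 xs = [] \<longleftrightarrow> xs = []" by (cases xs) auto

lemma drop_il1: "drop (2*m) (il1 xs) = il1 (drop m xs)"
  proof (induction m arbitrary: xs)
  case (Suc m) then show ?case by (cases xs) auto
qed simp
lemma drop_il2: "drop (2*m) (il2 xs) = il2 (drop m xs)"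
  proof (induction m arbitrary: xs)
  case (Suc m) then show ?case by (cases xs) auto
qed simp
lemma take_il1: "k < length xs \<Longrightarrow> take (2*k+1) (il1 xs) = butlast (il1 (take (Suc k) xs))"
proof (induction xs arbitrary: k)
  case (Cons a xs) then show ?case by (cases k) (auto simp: numeral_2_eq_2)
qed simp
lemma nth_il1: "k < length xs \<Longrightarrow> il1 xs ! (2*k+1) = 1"
proof (induction xs arbitrary: k)
  case (Cons a xs) then show ?case by (cases k) (auto simp: numeral_2_eq_2)
qed simp
lemma take_il2: "k < length xs \<Longrightarrow> take (2*k+1) (il2 xs) = il2 (take k xs) @ [1]"
proof (induction xs arbitrary: k)
  case (Cons a xs) then show ?case by (cases k) (auto simp: numeral_2_eq_2)
qed simp
lemma nth_il2: "k < length xs \<Longrightarrow> il2 xs ! (2*k+1) = xs ! k"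
proof (induction xs arbitrary: k)
  case (Cons a xs) then show ?case by (cases k) (auto simp: numeral_2_eq_2)
qed simp
lemma il2_snoc: "il2 xs @ [1] = 1 # il1 xs"
  by (induction xs) auto
lemma butlast_il1: "butlast (il1 (a#ys)) = a # il2 ys"
proof -
  have "butlast (1 # il1 ys) = il2 ys" by (induction ys) auto
  then show ?thesis by simp
qed

lemma Rt_Leaf_iff[simp]: "Rt t = Leaf \<longleftrightarrow> t = Leaf" by (cases t) auto

lemma nodes_Rt[simp]: "nodes (Rt t) = 2 * nodes t"
  by (induction t) auto

lemma mprod_I_Nil: "mprod Iop F [] = 0"
  by (simp add: mprod_def Iop_def)
lemma mprod_I_Cons: "mprod Iop F (a#r) = a * F r"
proof -
  have "mprod Iop F (a#r) = (\<Sum>k=0..length (a#r). if k = 1 then a * F r else 0)"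
    unfolding mprod_def
    by (rule sum.cong[OF refl]) (use le0 in \<open>auto simp: Iop_def min_def Suc_le_eq\<close>)
  also have "\<dots> = a * F r" by (subst sum.delta) auto
  finally show ?thesis .
qed

lemma part1:
  assumes g: "\<And>a r. g (a#r) = a * G r" and g0: "g [] = 0"
  shows "boxtimes f g xs = mprod (boxtimes1 f g) (boxtimes2 f g) xs"
proof -
  have B2: "boxtimes2 f g ys = (\<Sum>\<rho>\<in>Y (length ys). G (cup_args f g (Rt \<rho>) (il1 ys)))" for ys
  proof (cases "ys = []")
    case True then show ?thesis by (simp add: boxtimes2_def Y0 g)
  next
    case False then show ?thesis
      by (simp add: boxtimes2_def il2_snoc cup_def g)
  qed
  show ?thesis
  proof (cases xs)
    case Nil then show ?thesis by (simp add: boxtimes_def mprod_def boxtimes1_def g0)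
  next
    case (Cons x0 xs0)
    define n where "n = length xs0"
    have len: "length xs = Suc n" using Cons n_def by simp
    have "boxtimes f g xs = (\<Sum>\<tau>\<in>Y (Suc n). g (cup_args f g (Rt \<tau>) (il1 xs)))"
      using Cons len unfolding boxtimes_def cup_def by (simp, intro sum.cong refl, auto simp: Y_def split: ptree.split)
    also have "\<dots> = (\<Sum>m=0..n. \<Sum>s\<in>Y m. \<Sum>r\<in>Y (n-m). g (cup_args f g (Rt (Node s r)) (il1 xs)))"
      by (rule sum_Y_Suc)
    also have "\<dots> = (\<Sum>m=0..n. boxtimes1 f g (take (Suc m) xs) * boxtimes2 f g (drop (Suc m) xs))"
    proof (rule sum.cong[OF refl])
      fix m assume m: "m \<in> {0..n}"
      have "(\<Sum>s\<in>Y m. \<Sum>r\<in>Y (n-m). g (cup_args f g (Rt (Node s r)) (il1 xs)))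
         = (\<Sum>s\<in>Y m. \<Sum>r\<in>Y (n-m). cup g f (Node Leaf (Rt s)) (butlast (il1 (take (Suc m) xs)))
              * G (cup_args f g (Rt r) (il1 (drop (Suc m) xs))))"
      proof (intro sum.cong refl)
        fix s r assume s: "s \<in> Y m"
        then have ns: "nodes s = m" by (simp add: Y_def)
        have lt: "m < length xs" using m len by simp
        have e1: "take (Suc (2*m)) (il1 xs) = butlast (il1 (take (Suc m) xs))"
          using take_il1[OF lt] by simp
        have e2: "il1 xs ! Suc (2*m) = 1" using nth_il1[OF lt] by simp
        have e3: "drop (Suc (Suc (2*m))) (il1 xs) = il1 (drop (Suc m) xs)"
          using drop_il1[of "Suc m" xs] by simp
        show "g (cup_args f g (Rt (Node s r)) (il1 xs)) = cup g f (Node Leaf (Rt s)) (butlast (il1 (take (Suc m) xs)))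
              * G (cup_args f g (Rt r) (il1 (drop (Suc m) xs)))"
          by (simp add: ns e1 e2 e3 g cup_def)
      qed
      also have "\<dots> = (\<Sum>s\<in>Y m. cup g f (Node Leaf (Rt s)) (butlast (il1 (take (Suc m) xs))))
          * (\<Sum>r\<in>Y (n-m). G (cup_args f g (Rt r) (il1 (drop (Suc m) xs))))"
        by (subst sum_product, rule refl)
      also have "\<dots> = boxtimes1 f g (take (Suc m) xs) * boxtimes2 f g (drop (Suc m) xs)"
        using m len by (auto simp: B2 boxtimes1_def min_def)
      finally show "(\<Sum>s\<in>Y m. \<Sum>r\<in>Y (n-m). g (cup_args f g (Rt (Node s r)) (il1 xs)))
         = boxtimes1 f g (take (Suc m) xs) * boxtimes2 f g (drop (Suc m) xs)" .
    qed
    also have "\<dots> = mprod (boxtimes1 f g) (boxtimes2 f g) xs"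
      unfolding mprod_def len by (subst sum.atLeast0_atMost_Suc_shift) (simp add: boxtimes1_def[of f g "[]"])
    finally show ?thesis .
  qed
qed

lemma part2:
  assumes f: "\<And>a r. f (a#r) = a * F r" and f0: "f [] = 0"
  shows "uboxtimes g f xs = mprod (boxtimes2 f g) (boxtimes1 f g) xs"
proof -
  have B2: "boxtimes2 f g ys = (\<Sum>\<sigma>\<in>Y (length ys). cup f g (Node Leaf (Rt \<sigma>)) (il2 ys @ [1]))" for ys
    by (cases "ys = []") (simp_all add: boxtimes2_def Y0 cup_def)
  have B1: "boxtimes1 f g (a#zs) = a * (\<Sum>\<rho>\<in>Y (length zs). F (cup_args g f (Rt \<rho>) (il2 zs)))" for a zs
    by (simp del: il1_Cons add: boxtimes1_def butlast_il1 cup_def f sum_distrib_left)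
  show ?thesis
  proof (cases xs)
    case Nil then show ?thesis by (simp add: uboxtimes_def mprod_def boxtimes1_def f0)
  next
    case (Cons x0 xs0)
    define n where "n = length xs0"
    have len: "length xs = Suc n" using Cons n_def by simp
    have "uboxtimes g f xs = (\<Sum>\<tau>\<in>Y (Suc n). f (cup_args g f (Rt \<tau>) (il2 xs)))"
      using Cons len unfolding uboxtimes_def cup_def by (simp, intro sum.cong refl, auto simp: Y_def split: ptree.split)
    also have "\<dots> = (\<Sum>m=0..n. \<Sum>s\<in>Y m. \<Sum>r\<in>Y (n-m). f (cup_args g f (Rt (Node s r)) (il2 xs)))"
      by (rule sum_Y_Suc)
    also have "\<dots> = (\<Sum>m=0..n. boxtimes2 f g (take m xs) * boxtimes1 f g (drop m xs))"
    proof (rule sum.cong[OF refl])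
      fix m assume m: "m \<in> {0..n}"
      have lt: "m < length xs" using m len by simp
      have "(\<Sum>s\<in>Y m. \<Sum>r\<in>Y (n-m). f (cup_args g f (Rt (Node s r)) (il2 xs)))
         = (\<Sum>s\<in>Y m. \<Sum>r\<in>Y (n-m). cup f g (Node Leaf (Rt s)) (il2 (take m xs) @ [1])
              * (xs ! m * F (cup_args g f (Rt r) (il2 (drop (Suc m) xs)))))"
      proof (intro sum.cong refl)
        fix s r assume s: "s \<in> Y m"
        then have ns: "nodes s = m" by (simp add: Y_def)
        have e1: "take (Suc (2*m)) (il2 xs) = il2 (take m xs) @ [1]"
          using take_il2[OF lt] by simp
        have e2: "il2 xs ! Suc (2*m) = xs ! m" using nth_il2[OF lt] by simp
        have e3: "drop (Suc (Suc (2*m))) (il2 xs) = il2 (drop (Suc m) xs)"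
          using drop_il2[of "Suc m" xs] by simp
        show "f (cup_args g f (Rt (Node s r)) (il2 xs)) = cup f g (Node Leaf (Rt s)) (il2 (take m xs) @ [1])
              * (xs ! m * F (cup_args g f (Rt r) (il2 (drop (Suc m) xs))))"
          by (simp add: ns e1 e2 e3 f cup_def mult.assoc)
      qed
      also have "\<dots> = (\<Sum>s\<in>Y m. cup f g (Node Leaf (Rt s)) (il2 (take m xs) @ [1]))
          * (xs ! m * (\<Sum>r\<in>Y (n-m). F (cup_args g f (Rt r) (il2 (drop (Suc m) xs)))))"
        by (subst sum_distrib_left[of "xs!m"], subst sum_product, rule refl)
      also have "\<dots> = boxtimes2 f g (take m xs) * boxtimes1 f g (drop m xs)"
        using m len lt by (simp add: B2 B1 Cons_nth_drop_Suc[symmetric] min_def)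
      finally show "(\<Sum>s\<in>Y m. \<Sum>r\<in>Y (n-m). f (cup_args g f (Rt (Node s r)) (il2 xs)))
         = boxtimes2 f g (take m xs) * boxtimes1 f g (drop m xs)" .
    qed
    also have "\<dots> = mprod (boxtimes2 f g) (boxtimes1 f g) xs"
      unfolding mprod_def len by (simp add: sum.atLeast0_atMost_Suc boxtimes1_def len)
    finally show ?thesis .
  qed
qed

theorem lemma3:
  fixes scal :: "'k::field_char_0 \<Rightarrow> 'b::ring_1 \<Rightarrow> 'b"
    and f g :: "'b list \<Rightarrow> 'b"
  assumes "is_algebra scal"
    and "f \<in> IMult scal" and "g \<in> IMult scal"
  shows "boxtimes f g = mprod (boxtimes1 f g) (boxtimes2 f g)
     \<and> uboxtimes g f = mprod (boxtimes2 f g) (boxtimes1 f g)"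
proof -
  obtain F where F: "f = mprod Iop F" using assms(2) by (auto simp: IMult_def)
  obtain G where G: "g = mprod Iop G" using assms(3) by (auto simp: IMult_def)
  have f: "\<And>a r. f (a#r) = a * F r" and f0: "f [] = 0"
    by (simp_all add: F mprod_I_Cons mprod_I_Nil)
  have g: "\<And>a r. g (a#r) = a * G r" and g0: "g [] = 0" by (simp_all add: G mprod_I_Cons mprod_I_Nil)
  show ?thesis using part1[OF g g0] part2[OF f f0] by auto
qed

end
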